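(* Every star gallery is normal.
   Context: An art gallery $\Gamma$ is a simple polygon in the plane (closed region: boundary together with interior), whose boundary (the walls) consists of finitely many line segments. A guard is a point of $\Gamma$; a guard $G$ visually covers $A\in\Gamma$ if the segment $GA$ lies entirely in $\Gamma$. A configuration of guards is a set $F$ of points of $\Gamma$; it visually covers $X\subseteq\Gamma$ if each point of $X$ is visually covered by some guard in $F$. $\Gamma$ is normal if every configuration of guards visually covering the walls visually covers all of $\Gamma$. $\Gamma$ is a star gallery if there is a point $P\in\Gamma$ such that for every $X\in\Gamma$ the segment $PX$ lies in $\Gamma$. *)

theory Defs
  imports "HOL-Analysis.Analysis"
begin

definition edge :: "complex list \<Rightarrow> nat \<Rightarrow> complex set" where
  "edge vs i = closed_segment (vs ! i) (vs ! ((i + 1) mod length vs))"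

definition simple_polygon :: "complex list \<Rightarrow> bool" where
  "simple_polygon vs \<longleftrightarrow>
     length vs \<ge> 3 \<and> distinct vs \<and>
     (\<forall>i < length vs. \<forall>j < length vs. i \<noteq> j \<longrightarrow>
        (if j = (i + 1) mod length vs then edge vs i \<inter> edge vs j = {vs ! j}
         else if i = (j + 1) mod length vs then edge vs i \<inter> edge vs j = {vs ! i}
         else edge vs i \<inter> edge vs j = {}))"

definition walls :: "complex list \<Rightarrow> complex set" where
  "walls vs = (\<Union>i < length vs. edge vs i)"

definition gallery :: "complex list \<Rightarrow> complex set" where
  "gallery vs = walls vs \<union> inside (walls vs)"

definition visually_covers :: "complex set \<Rightarrow> complex set \<Rightarrow> complex set \<Rightarrow> bool" where
  "visually_covers \<Gamma> F X \<longleftrightarrow> (\<forall>A \<in> X. \<exists>G \<in> F. closed_segment G A \<subseteq> \<Gamma>)"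

definition normal_gallery :: "complex list \<Rightarrow> bool" where
  "normal_gallery vs \<longleftrightarrow>
     (\<forall>F. F \<subseteq> gallery vs \<longrightarrow> visually_covers (gallery vs) F (walls vs)
            \<longrightarrow> visually_covers (gallery vs) F (gallery vs))"

definition star_gallery :: "complex list \<Rightarrow> bool" where
  "star_gallery vs \<longleftrightarrow>
     (\<exists>P \<in> gallery vs. \<forall>X \<in> gallery vs. closed_segment P X \<subseteq> gallery vs)"

end

theory Submission imports Defs begin

lemma outside_component_sub:
  assumes "x \<in> outside S"
  shows "connected_component_set (- S) x \<subseteq> outside S"
proof
  fix y assume "y \<in> connected_component_set (- S) x"
  then have "connected_component_set (- S) y = connected_component_set (- S) x"
    by (metis connected_component_eq mem_Collect_eq)
  then show "y \<in> outside S" using assms by (simp add: outside)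
qed

lemma tri_in:
  fixes a b c :: complex
  assumes "closed_segment a b \<subseteq> S \<union> inside S" "closed_segment b c \<subseteq> S \<union> inside S"
    "closed_segment a c \<subseteq> S \<union> inside S"
  shows "convex hull {a,b,c} \<subseteq> S \<union> inside S"
proof (cases "card {a,b,c} = 3")
  case True
  have neq: "a \<noteq> b" "b \<noteq> c" "a \<noteq> c" using True by (auto simp: card_insert_if split: if_splits)
  have fr: "frontier (convex hull {a,b,c}) \<subseteq> S \<union> inside S"
  proof -
    have "frontier (convex hull {a,b,c}) = \<Union> {convex hull ({a,b,c} - {d}) | d. d \<in> {a,b,c}}"
      by (rule frontier_of_convex_hull) (use True in simp)
    also have "\<dots> \<subseteq> S \<union> inside S"
      using assms neq by (auto simp: insert_Diff_if segment_convex_hull insert_commute)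
    finally show ?thesis .
  qed
  show ?thesis
  proof
    fix x assume xK: "x \<in> convex hull {a,b,c}"
    show "x \<in> S \<union> inside S"
    proof (rule ccontr)
      assume "x \<notin> S \<union> inside S"
      then have xo: "x \<in> outside S" by (simp add: union_with_inside)
      define C where "C = connected_component_set (- S) x"
      have Co: "C \<subseteq> outside S" using outside_component_sub[OF xo] C_def by simp
      have "x \<notin> S" using xo by (meson disjoint_iff outside_no_overlap)
      then have xC: "x \<in> C" by (simp add: C_def)
      have "C \<inter> frontier (convex hull {a,b,c}) = {}"
        using fr Co by (auto simp: union_with_inside)
      moreover have "connected C" by (simp add: C_def)
      ultimately have "C - convex hull {a,b,c} = {}"
        using connected_Int_frontier[of C "convex hull {a,b,c}"] xC xK by blast
      then have "bounded C"
        by (meson Diff_eq_empty_iff bounded_subset finite_imp_bounded_convex_hull finite.intros)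
      then show False using xo by (simp add: outside C_def)
    qed
  qed
next
  case False
  then have "a = b \<or> b = c \<or> a = c" by (auto simp: card_insert_if split: if_splits)
  then show ?thesis using assms
    by (auto simp: segment_convex_hull insert_commute)
qed


lemma l1: fixes P A z :: complex assumes "norm z \<le> B" "norm (z - P) = t * norm (A - P)"
  shows "t * norm (A - P) \<le> B + norm P"
  using assms norm_triangle_ineq4[of z P] by linarith
lemma l2a: fixes P d :: complex and t0 c :: real
  shows "dist (P + of_real t0 * d) (P + of_real (t0 + c) * d) = \<bar>c\<bar> * norm d"
proof -
  have "(P + of_real t0 * d) - (P + of_real (t0 + c) * d) = - (of_real c * d)" by (simp add: algebra_simps)
  then show ?thesis by (simp add: dist_norm norm_mult)
qed
lemma l2: fixes P A :: complex and t0 e :: real assumes "norm (A-P) > 0" "e > 0"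
  shows "dist (P + of_real t0 * (A - P)) (P + of_real (t0 + e / (2 * norm (A - P))) * (A - P)) = e / 2"
  using assms by (simp only: l2a) simp
lemma l3: fixes P A :: complex and t0 :: real assumes "t0 \<ge> 1"
  shows "A = (1 - 1/t0) *\<^sub>R P + (1/t0) *\<^sub>R (P + of_real t0 * (A - P))"
proof -
  have "(1/t0) *\<^sub>R (P + of_real t0 * (A - P)) = (1/t0) *\<^sub>R P + (A - P)"
    using assms by (simp add: scaleR_conv_of_real algebra_simps)
  then show ?thesis by (simp add: algebra_simps)
qed

lemma closed_walls: "closed (walls vs)"
  unfolding walls_def edge_def by (intro compact_imp_closed compact_UN) auto

lemma bounded_walls: "bounded (walls vs)"
  unfolding walls_def edge_def by (intro compact_imp_bounded compact_UN) auto

lemma ray_hits_wall: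
  fixes P A :: complex
  assumes PG: "P \<in> gallery vs" and AG: "A \<in> gallery vs" and ne: "walls vs \<noteq> {}"
  shows "\<exists>W \<in> walls vs. A \<in> closed_segment P W"
proof (cases "A = P")
  case True
  then show ?thesis using ne by auto
next
  case False
  let ?S = "walls vs"
  let ?G = "gallery vs"
  have Gdef: "?G = - outside ?S" by (simp add: gallery_def union_with_inside)
  have clG: "closed ?G" using Gdef open_outside[OF closed_walls, of vs] by (simp add: closed_Compl)
  have bG: "bounded ?G" unfolding gallery_def by (simp add: bounded_Un bounded_walls bounded_inside)
  then obtain B where B: "\<And>z. z \<in> ?G \<Longrightarrow> norm z \<le> B" by (meson bounded_iff)
  define r where "r t = P + of_real t * (A - P)" for t
  define T where "T = {t. t \<ge> 1 \<and> r t \<in> ?G}"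
  have d: "norm (A - P) > 0" using False by simp
  have contr: "continuous_on UNIV r" unfolding r_def by (intro continuous_intros)
  have clT: "closed T"
  proof -
    have "closed {t. r t \<in> ?G}" using closed_vimage[OF clG contr] by (simp add: vimage_def)
    moreover have "closed {t::real. t \<ge> 1}" by (simp add: closed_Collect_le)
    ultimately show ?thesis unfolding T_def by (simp add: Collect_conj_eq closed_Int)
  qed
  have "1 \<in> T" using AG by (simp add: T_def r_def)
  then have Tne: "T \<noteq> {}" by auto
  have bdd: "bdd_above T"
  proof (rule bdd_aboveI)
    fix t assume "t \<in> T"
    then have t1: "t \<ge> 1" and "r t \<in> ?G" by (auto simp: T_def)
    then have "norm (r t) \<le> B" using B by auto
    moreover have "norm (r t - P) = t * norm (A - P)" using t1 by (simp add: r_def norm_mult)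
    ultimately have "t * norm (A - P) \<le> B + norm P" by (rule l1) 
    then show "t \<le> (B + norm P) / norm (A - P)" using d by (simp add: field_simps)
  qed
  define t0 where "t0 = Sup T"
  have t0T: "t0 \<in> T" unfolding t0_def by (rule closed_contains_Sup[OF Tne bdd clT])
  have t0ge: "t0 \<ge> 1" using t0T by (simp add: T_def)
  define W where "W = r t0"
  have WG: "W \<in> ?G" using t0T by (simp add: T_def W_def)
  have WS: "W \<in> ?S"
  proof (rule ccontr)
    assume "W \<notin> ?S"
    then have "W \<in> inside ?S" using WG by (simp add: gallery_def)
    then obtain e where e: "e > 0" "ball W e \<subseteq> inside ?S"
      using open_inside[OF closed_walls] by (meson open_contains_ball)
    define t1 where "t1 = t0 + e / (2 * norm (A - P))"
    have "dist W (r t1) = e / 2"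
      unfolding W_def r_def t1_def by (rule l2[OF d e(1)])
    then have "r t1 \<in> ball W e" using e by simp
    then have "r t1 \<in> ?G" using e by (auto simp: gallery_def)
    moreover have pos: "e / (2 * norm (A - P)) > 0" using d e by simp
    moreover have "t1 \<ge> 1" using t0ge pos unfolding t1_def by linarith
    ultimately have "t1 \<in> T" by (simp add: T_def)
    then have "t1 \<le> t0" unfolding t0_def by (rule cSup_upper[OF _ bdd])
    then show False using pos unfolding t1_def by linarith
  qed
  have "A \<in> closed_segment P W"
  proof -
    have "A = (1 - 1/t0) *\<^sub>R P + (1/t0) *\<^sub>R W"
      unfolding W_def r_def by (rule l3[OF t0ge])
    moreover have "0 \<le> 1/t0" "1/t0 \<le> 1" using t0ge by auto
    ultimately show ?thesis unfolding in_segment by blast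
  qed
  then show ?thesis using WS by blast
qed

theorem theorem2:
  fixes vs :: "complex list"
  assumes "simple_polygon vs"
    and "star_gallery vs"
  shows "normal_gallery vs"
  unfolding normal_gallery_def
proof (intro allI impI)
  fix F assume FG: "F \<subseteq> gallery vs" and cov: "visually_covers (gallery vs) F (walls vs)"
  obtain P where PG: "P \<in> gallery vs" and star: "\<And>X. X \<in> gallery vs \<Longrightarrow> closed_segment P X \<subseteq> gallery vs"
    using assms(2) unfolding star_gallery_def by blast
  have ne: "walls vs \<noteq> {}"
  proof -
    have "0 < length vs" using assms(1) unfolding simple_polygon_def by linarith
    then have "vs ! 0 \<in> walls vs" unfolding walls_def edge_def by auto
    then show ?thesis by auto
  qed
  show "visually_covers (gallery vs) F (gallery vs)"
    unfolding visually_covers_def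
  proof
    fix A assume AG: "A \<in> gallery vs"
    obtain W where WS: "W \<in> walls vs" and AW: "A \<in> closed_segment P W"
      using ray_hits_wall[OF PG AG ne] by blast
    obtain G where GF: "G \<in> F" and GW: "closed_segment G W \<subseteq> gallery vs"
      using cov WS unfolding visually_covers_def by blast
    have WG: "W \<in> gallery vs" using WS by (simp add: gallery_def)
    have GG: "G \<in> gallery vs" using GF FG by blast
    have "convex hull {P, G, W} \<subseteq> gallery vs"
      unfolding gallery_def
      by (rule tri_in) (use star[OF GG] star[OF WG] GW in \<open>simp_all add: gallery_def\<close>)
    moreover have "closed_segment G A \<subseteq> convex hull {P, G, W}"
    proof (rule closed_segment_subset)
      show "G \<in> convex hull {P, G, W}" by (simp add: hull_inc)
      have "closed_segment P W \<subseteq> convex hull {P, G, W}"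
        by (rule closed_segment_subset) (auto simp: hull_inc)
      then show "A \<in> convex hull {P, G, W}" using AW by blast
    qed (simp add: convex_convex_hull)
    ultimately show "\<exists>G\<in>F. closed_segment G A \<subseteq> gallery vs"
      using GF by blast
  qed
qed

end
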